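(* For every integer $k\ge 2$ and $n=\frac{k(2k^2+1)}{3}$, $$6n-\sqrt[3]{486}\,n^{2/3} < C_{fcc}(n)\le C(n).$$
   Context: A packing of unit balls in $\mathbb{E}^3$ is a family of closed unit balls with pairwise disjoint interiors; its contact number is the number of unordered pairs of balls whose centers are at distance exactly $2$. $C(n)$ is the maximum contact number over all packings of $n$ unit balls in $\mathbb{E}^3$. $\Lambda_{fcc}$ denotes the face-centered cubic lattice scaled so that its shortest non-zero vector has length $2$ (e.g. the set of integer points $(x,y,z)\in\mathbb{Z}^3$ with $x+y+z$ even, scaled by $\sqrt{2}$), and $C_{fcc}(n)$ is the largest contact number among packings of $n$ unit balls whose centers all lie in $\Lambda_{fcc}$. *)

theory Defs
  imports "HOL-Analysis.Analysis"
begin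

text \<open>A packing of unit balls in Euclidean 3-space is represented by the finite set of
  its centers; closed unit balls have pairwise disjoint interiors iff distinct centers are
  at distance at least 2.\<close>

definition unit_ball_packing :: "(real^3) set \<Rightarrow> bool" where
  "unit_ball_packing P \<longleftrightarrow> finite P \<and> (\<forall>x\<in>P. \<forall>y\<in>P. x \<noteq> y \<longrightarrow> dist x y \<ge> 2)"

definition contact_number :: "(real^3) set \<Rightarrow> nat" where
  "contact_number P = card {{x, y} | x y. x \<in> P \<and> y \<in> P \<and> dist x y = 2}"

definition C :: "nat \<Rightarrow> nat" where
  "C n = Sup {contact_number P | P. unit_ball_packing P \<and> card P = n}"

text \<open>Face-centered cubic lattice, scaled so that the shortest nonzero vector has length 2:
  sqrt 2 times the integer points with even coordinate sum.\<close>

definition fcc_lattice :: "(real^3) set" where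
  "fcc_lattice = {x. \<exists>v::int^3. even (v$1 + v$2 + v$3) \<and>
                        (\<forall>i. x$i = sqrt 2 * real_of_int (v$i))}"

definition C_fcc :: "nat \<Rightarrow> nat" where
  "C_fcc n = Sup {contact_number P | P. unit_ball_packing P \<and> card P = n \<and> P \<subseteq> fcc_lattice}"

end

theory Submission
  imports Defs
begin

type_synonym pt = "int \<times> int \<times> int"

definition oct :: "int \<Rightarrow> pt set" where
  "oct a = {(x,y,z). \<bar>x - a\<bar> + \<bar>y\<bar> + \<bar>z\<bar> \<le> a \<and> even (x+y+z)}"

fun padd :: "pt \<Rightarrow> pt \<Rightarrow> pt" where
  "padd (x,y,z) (d1,d2,d3) = (x+d1,y+d2,z+d3)"

fun emb :: "pt \<Rightarrow> real^3" where
  "emb (x,y,z) = vector [sqrt 2 * of_int x, sqrt 2 * of_int y, sqrt 2 * of_int z]"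

fun sqd :: "pt \<Rightarrow> pt \<Rightarrow> int" where
  "sqd (x,y,z) (x',y',z') = (x-x')^2 + (y-y')^2 + (z-z')^2"

lemma dist_emb: "dist (emb p) (emb q) = sqrt (2 * real_of_int (sqd p q))"
proof -
  obtain x y z x' y' z' where p: "p = (x,y,z)" and q: "q = (x',y',z')" by (cases p, cases q) auto
  have "dist (emb p) (emb q) = sqrt ((sqrt 2 * x - sqrt 2 * x')^2 + (sqrt 2 * y - sqrt 2 * y')^2 + (sqrt 2 * z - sqrt 2 * z')^2)"
    unfolding p q by (simp add: dist_vec_def L2_set_def sum_3 dist_real_def)
  also have "\<dots> = sqrt (2 * real_of_int (sqd p q))"
    unfolding p q by (simp add: power2_eq_square algebra_simps)
  finally show ?thesis .
qed

lemma emb_inj: "inj emb"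
  unfolding inj_def by (auto simp: vec_eq_iff forall_3)

lemma sq_ge2: fixes a b c :: int assumes "a \<noteq> 0 \<or> b \<noteq> 0 \<or> c \<noteq> 0" "even (a+b+c)" shows "a^2+b^2+c^2 \<ge> 2"
proof -
  have h: "\<And>t::int. t^2 \<ge> \<bar>t\<bar>"
  proof -
    fix t :: int
    show "t^2 \<ge> \<bar>t\<bar>"
    proof (cases "t = 0")
      case False
      then have "\<bar>t\<bar> * 1 \<le> \<bar>t\<bar> * \<bar>t\<bar>" by (intro mult_left_mono) auto
      then show ?thesis by (simp add: power2_eq_square)
    qed simp
  qed
  have e: "even (\<bar>a\<bar>+\<bar>b\<bar>+\<bar>c\<bar>)" using assms(2) by simp
  have "\<bar>a\<bar>+\<bar>b\<bar>+\<bar>c\<bar> \<ge> 1" using assms(1) by auto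
  moreover have "\<bar>a\<bar>+\<bar>b\<bar>+\<bar>c\<bar> \<noteq> 1" using e by (metis odd_one)
  ultimately have "\<bar>a\<bar>+\<bar>b\<bar>+\<bar>c\<bar> \<ge> 2" by linarith
  then show ?thesis using h[of a] h[of b] h[of c] by linarith
qed

definition phi :: "int \<Rightarrow> int \<Rightarrow> int \<times> int" where
  "phi s r = (if r \<ge> 0 then (s, s+r) else (s-r, s))"

lemma inj_bound:
  fixes B :: "pt set" and s r :: "pt \<Rightarrow> int"
  assumes "\<And>p. p \<in> B \<Longrightarrow> 0 \<le> s p \<and> s p + \<bar>r p\<bar> \<le> a"
    and "\<And>p p'. p \<in> B \<Longrightarrow> p' \<in> B \<Longrightarrow> s p = s p' \<Longrightarrow> r p = r p' \<Longrightarrow> p = p'"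
  shows "card B \<le> nat (a+1) * nat (a+1)"
proof -
  have "card B \<le> card ({0..a} \<times> {0..a})"
  proof (rule card_inj_on_le[where f = "\<lambda>p. phi (s p) (r p)"])
    show "inj_on (\<lambda>p. phi (s p) (r p)) B"
    proof (rule inj_onI)
      fix p p' assume "p \<in> B" "p' \<in> B" "phi (s p) (r p) = phi (s p') (r p')"
      then have "s p = s p' \<and> r p = r p'" unfolding phi_def by (auto split: if_splits)
      then show "p = p'" using assms(2) \<open>p \<in> B\<close> \<open>p' \<in> B\<close> by blast
    qed
    show "(\<lambda>p. phi (s p) (r p)) ` B \<subseteq> {0..a} \<times> {0..a}"
    proof (rule image_subsetI)
      fix p assume "p \<in> B"
      then have "0 \<le> s p" "s p + \<bar>r p\<bar> \<le> a" using assms(1) by auto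
      then show "phi (s p) (r p) \<in> {0..a} \<times> {0..a}" unfolding phi_def by (cases "r p \<ge> 0") auto
    qed
  qed simp
  then show ?thesis by simp
qed

lemma B1: "card {p \<in> oct a. padd p (1,1,0) \<notin> oct a} \<le> nat (a+1) * nat (a+1)"
proof (rule inj_bound[where s = "\<lambda>(x,y,z). x - a" and r = "\<lambda>(x,y,z). z"])
  have face: "x - a \<ge> 0 \<and> y \<ge> 0 \<and> \<bar>x - a\<bar> + \<bar>y\<bar> + \<bar>z\<bar> = a" if "(x,y,z) \<in> {p \<in> oct a. padd p (1,1,0) \<notin> oct a}" for x y z
  proof -
    from that have h1: "\<bar>x - a\<bar> + \<bar>y\<bar> + \<bar>z\<bar> \<le> a" "even (x+y+z)"
      by (auto simp: oct_def)
    from that h1(2) have h2: "\<not> \<bar>x + (1) - a\<bar> + \<bar>y + (1)\<bar> + \<bar>z + (0)\<bar> \<le> a"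
      by (auto simp: oct_def)
    have "even (\<bar>x - a\<bar> + \<bar>y\<bar> + \<bar>z\<bar> + a)" using h1(2) by auto
    then have "\<bar>x - a\<bar> + \<bar>y\<bar> + \<bar>z\<bar> \<noteq> a - 1" by (metis diff_add_cancel even_add odd_one)
    then show ?thesis using h1(1) h2 by arith
  qed
  show "0 \<le> (case p of (x,y,z) \<Rightarrow> x - a) \<and> (case p of (x,y,z) \<Rightarrow> x - a) + \<bar>case p of (x,y,z) \<Rightarrow> z\<bar> \<le> a"
    if "p \<in> {p \<in> oct a. padd p (1,1,0) \<notin> oct a}" for p
    using that face by (cases p) force
  show "p = p'" if "p \<in> {p \<in> oct a. padd p (1,1,0) \<notin> oct a}" "p' \<in> {p \<in> oct a. padd p (1,1,0) \<notin> oct a}"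
     "(case p of (x,y,z) \<Rightarrow> x - a) = (case p' of (x,y,z) \<Rightarrow> x - a)" "(case p of (x,y,z) \<Rightarrow> z) = (case p' of (x,y,z) \<Rightarrow> z)" for p p'
    using that face[of "fst p" "fst (snd p)" "snd (snd p)"] face[of "fst p'" "fst (snd p')" "snd (snd p')"]
    by (cases p; cases p') auto
qed

lemma B2: "card {p \<in> oct a. padd p (1,-1,0) \<notin> oct a} \<le> nat (a+1) * nat (a+1)"
proof (rule inj_bound[where s = "\<lambda>(x,y,z). x - a" and r = "\<lambda>(x,y,z). z"])
  have face: "x - a \<ge> 0 \<and> y \<le> 0 \<and> \<bar>x - a\<bar> + \<bar>y\<bar> + \<bar>z\<bar> = a" if "(x,y,z) \<in> {p \<in> oct a. padd p (1,-1,0) \<notin> oct a}" for x y z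
  proof -
    from that have h1: "\<bar>x - a\<bar> + \<bar>y\<bar> + \<bar>z\<bar> \<le> a" "even (x+y+z)"
      by (auto simp: oct_def)
    from that h1(2) have h2: "\<not> \<bar>x + (1) - a\<bar> + \<bar>y + (-1)\<bar> + \<bar>z + (0)\<bar> \<le> a"
      by (auto simp: oct_def)
    have "even (\<bar>x - a\<bar> + \<bar>y\<bar> + \<bar>z\<bar> + a)" using h1(2) by auto
    then have "\<bar>x - a\<bar> + \<bar>y\<bar> + \<bar>z\<bar> \<noteq> a - 1" by (metis diff_add_cancel even_add odd_one)
    then show ?thesis using h1(1) h2 by arith
  qed
  show "0 \<le> (case p of (x,y,z) \<Rightarrow> x - a) \<and> (case p of (x,y,z) \<Rightarrow> x - a) + \<bar>case p of (x,y,z) \<Rightarrow> z\<bar> \<le> a"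
    if "p \<in> {p \<in> oct a. padd p (1,-1,0) \<notin> oct a}" for p
    using that face by (cases p) force
  show "p = p'" if "p \<in> {p \<in> oct a. padd p (1,-1,0) \<notin> oct a}" "p' \<in> {p \<in> oct a. padd p (1,-1,0) \<notin> oct a}"
     "(case p of (x,y,z) \<Rightarrow> x - a) = (case p' of (x,y,z) \<Rightarrow> x - a)" "(case p of (x,y,z) \<Rightarrow> z) = (case p' of (x,y,z) \<Rightarrow> z)" for p p'
    using that face[of "fst p" "fst (snd p)" "snd (snd p)"] face[of "fst p'" "fst (snd p')" "snd (snd p')"]
    by (cases p; cases p') auto
qed

lemma B3: "card {p \<in> oct a. padd p (1,0,1) \<notin> oct a} \<le> nat (a+1) * nat (a+1)"
proof (rule inj_bound[where s = "\<lambda>(x,y,z). x - a" and r = "\<lambda>(x,y,z). y"])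
  have face: "x - a \<ge> 0 \<and> z \<ge> 0 \<and> \<bar>x - a\<bar> + \<bar>y\<bar> + \<bar>z\<bar> = a" if "(x,y,z) \<in> {p \<in> oct a. padd p (1,0,1) \<notin> oct a}" for x y z
  proof -
    from that have h1: "\<bar>x - a\<bar> + \<bar>y\<bar> + \<bar>z\<bar> \<le> a" "even (x+y+z)"
      by (auto simp: oct_def)
    from that h1(2) have h2: "\<not> \<bar>x + (1) - a\<bar> + \<bar>y + (0)\<bar> + \<bar>z + (1)\<bar> \<le> a"
      by (auto simp: oct_def)
    have "even (\<bar>x - a\<bar> + \<bar>y\<bar> + \<bar>z\<bar> + a)" using h1(2) by auto
    then have "\<bar>x - a\<bar> + \<bar>y\<bar> + \<bar>z\<bar> \<noteq> a - 1" by (metis diff_add_cancel even_add odd_one)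
    then show ?thesis using h1(1) h2 by arith
  qed
  show "0 \<le> (case p of (x,y,z) \<Rightarrow> x - a) \<and> (case p of (x,y,z) \<Rightarrow> x - a) + \<bar>case p of (x,y,z) \<Rightarrow> y\<bar> \<le> a"
    if "p \<in> {p \<in> oct a. padd p (1,0,1) \<notin> oct a}" for p
    using that face by (cases p) force
  show "p = p'" if "p \<in> {p \<in> oct a. padd p (1,0,1) \<notin> oct a}" "p' \<in> {p \<in> oct a. padd p (1,0,1) \<notin> oct a}"
     "(case p of (x,y,z) \<Rightarrow> x - a) = (case p' of (x,y,z) \<Rightarrow> x - a)" "(case p of (x,y,z) \<Rightarrow> y) = (case p' of (x,y,z) \<Rightarrow> y)" for p p'
    using that face[of "fst p" "fst (snd p)" "snd (snd p)"] face[of "fst p'" "fst (snd p')" "snd (snd p')"]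
    by (cases p; cases p') auto
qed

lemma B4: "card {p \<in> oct a. padd p (1,0,-1) \<notin> oct a} \<le> nat (a+1) * nat (a+1)"
proof (rule inj_bound[where s = "\<lambda>(x,y,z). x - a" and r = "\<lambda>(x,y,z). y"])
  have face: "x - a \<ge> 0 \<and> z \<le> 0 \<and> \<bar>x - a\<bar> + \<bar>y\<bar> + \<bar>z\<bar> = a" if "(x,y,z) \<in> {p \<in> oct a. padd p (1,0,-1) \<notin> oct a}" for x y z
  proof -
    from that have h1: "\<bar>x - a\<bar> + \<bar>y\<bar> + \<bar>z\<bar> \<le> a" "even (x+y+z)"
      by (auto simp: oct_def)
    from that h1(2) have h2: "\<not> \<bar>x + (1) - a\<bar> + \<bar>y + (0)\<bar> + \<bar>z + (-1)\<bar> \<le> a"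
      by (auto simp: oct_def)
    have "even (\<bar>x - a\<bar> + \<bar>y\<bar> + \<bar>z\<bar> + a)" using h1(2) by auto
    then have "\<bar>x - a\<bar> + \<bar>y\<bar> + \<bar>z\<bar> \<noteq> a - 1" by (metis diff_add_cancel even_add odd_one)
    then show ?thesis using h1(1) h2 by arith
  qed
  show "0 \<le> (case p of (x,y,z) \<Rightarrow> x - a) \<and> (case p of (x,y,z) \<Rightarrow> x - a) + \<bar>case p of (x,y,z) \<Rightarrow> y\<bar> \<le> a"
    if "p \<in> {p \<in> oct a. padd p (1,0,-1) \<notin> oct a}" for p
    using that face by (cases p) force
  show "p = p'" if "p \<in> {p \<in> oct a. padd p (1,0,-1) \<notin> oct a}" "p' \<in> {p \<in> oct a. padd p (1,0,-1) \<notin> oct a}"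
     "(case p of (x,y,z) \<Rightarrow> x - a) = (case p' of (x,y,z) \<Rightarrow> x - a)" "(case p of (x,y,z) \<Rightarrow> y) = (case p' of (x,y,z) \<Rightarrow> y)" for p p'
    using that face[of "fst p" "fst (snd p)" "snd (snd p)"] face[of "fst p'" "fst (snd p')" "snd (snd p')"]
    by (cases p; cases p') auto
qed

lemma B5: "card {p \<in> oct a. padd p (0,1,1) \<notin> oct a} \<le> nat (a+1) * nat (a+1)"
proof (rule inj_bound[where s = "\<lambda>(x,y,z). y" and r = "\<lambda>(x,y,z). x - a"])
  have face: "y \<ge> 0 \<and> z \<ge> 0 \<and> \<bar>x - a\<bar> + \<bar>y\<bar> + \<bar>z\<bar> = a" if "(x,y,z) \<in> {p \<in> oct a. padd p (0,1,1) \<notin> oct a}" for x y z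
  proof -
    from that have h1: "\<bar>x - a\<bar> + \<bar>y\<bar> + \<bar>z\<bar> \<le> a" "even (x+y+z)"
      by (auto simp: oct_def)
    from that h1(2) have h2: "\<not> \<bar>x + (0) - a\<bar> + \<bar>y + (1)\<bar> + \<bar>z + (1)\<bar> \<le> a"
      by (auto simp: oct_def)
    have "even (\<bar>x - a\<bar> + \<bar>y\<bar> + \<bar>z\<bar> + a)" using h1(2) by auto
    then have "\<bar>x - a\<bar> + \<bar>y\<bar> + \<bar>z\<bar> \<noteq> a - 1" by (metis diff_add_cancel even_add odd_one)
    then show ?thesis using h1(1) h2 by arith
  qed
  show "0 \<le> (case p of (x,y,z) \<Rightarrow> y) \<and> (case p of (x,y,z) \<Rightarrow> y) + \<bar>case p of (x,y,z) \<Rightarrow> x - a\<bar> \<le> a"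
    if "p \<in> {p \<in> oct a. padd p (0,1,1) \<notin> oct a}" for p
    using that face by (cases p) force
  show "p = p'" if "p \<in> {p \<in> oct a. padd p (0,1,1) \<notin> oct a}" "p' \<in> {p \<in> oct a. padd p (0,1,1) \<notin> oct a}"
     "(case p of (x,y,z) \<Rightarrow> y) = (case p' of (x,y,z) \<Rightarrow> y)" "(case p of (x,y,z) \<Rightarrow> x - a) = (case p' of (x,y,z) \<Rightarrow> x - a)" for p p'
    using that face[of "fst p" "fst (snd p)" "snd (snd p)"] face[of "fst p'" "fst (snd p')" "snd (snd p')"]
    by (cases p; cases p') auto
qed

lemma B6: "card {p \<in> oct a. padd p (0,1,-1) \<notin> oct a} \<le> nat (a+1) * nat (a+1)"
proof (rule inj_bound[where s = "\<lambda>(x,y,z). y" and r = "\<lambda>(x,y,z). x - a"])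
  have face: "y \<ge> 0 \<and> z \<le> 0 \<and> \<bar>x - a\<bar> + \<bar>y\<bar> + \<bar>z\<bar> = a" if "(x,y,z) \<in> {p \<in> oct a. padd p (0,1,-1) \<notin> oct a}" for x y z
  proof -
    from that have h1: "\<bar>x - a\<bar> + \<bar>y\<bar> + \<bar>z\<bar> \<le> a" "even (x+y+z)"
      by (auto simp: oct_def)
    from that h1(2) have h2: "\<not> \<bar>x + (0) - a\<bar> + \<bar>y + (1)\<bar> + \<bar>z + (-1)\<bar> \<le> a"
      by (auto simp: oct_def)
    have "even (\<bar>x - a\<bar> + \<bar>y\<bar> + \<bar>z\<bar> + a)" using h1(2) by auto
    then have "\<bar>x - a\<bar> + \<bar>y\<bar> + \<bar>z\<bar> \<noteq> a - 1" by (metis diff_add_cancel even_add odd_one)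
    then show ?thesis using h1(1) h2 by arith
  qed
  show "0 \<le> (case p of (x,y,z) \<Rightarrow> y) \<and> (case p of (x,y,z) \<Rightarrow> y) + \<bar>case p of (x,y,z) \<Rightarrow> x - a\<bar> \<le> a"
    if "p \<in> {p \<in> oct a. padd p (0,1,-1) \<notin> oct a}" for p
    using that face by (cases p) force
  show "p = p'" if "p \<in> {p \<in> oct a. padd p (0,1,-1) \<notin> oct a}" "p' \<in> {p \<in> oct a. padd p (0,1,-1) \<notin> oct a}"
     "(case p of (x,y,z) \<Rightarrow> y) = (case p' of (x,y,z) \<Rightarrow> y)" "(case p of (x,y,z) \<Rightarrow> x - a) = (case p' of (x,y,z) \<Rightarrow> x - a)" for p p'
    using that face[of "fst p" "fst (snd p)" "snd (snd p)"] face[of "fst p'" "fst (snd p')" "snd (snd p')"]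
    by (cases p; cases p') auto
qed

definition T :: "int \<Rightarrow> pt set" where
  "T a = {(u,v,w). 0 \<le> w \<and> w \<le> a \<and> 0 \<le> u \<and> u \<le> w \<and> 0 \<le> v \<and> v \<le> w}"

lemma T_finite: "finite (T a)"
proof -
  have "T a \<subseteq> {0..a} \<times> {0..a} \<times> {0..a}" unfolding T_def by auto
  then show ?thesis by (rule finite_subset) simp
qed

lemma T_card: "6 * int (card (T (int m))) = (int m+1)*(int m+2)*(2*int m+3)"
proof (induction m)
  case 0
  have "T 0 = {(0,0,0)}" unfolding T_def by auto
  then show ?case by simp
next
  case (Suc m)
  let ?L = "{0..int m+1} \<times> {0..int m+1} \<times> {int m+1}"
  have eq: "T (int (Suc m)) = T (int m) \<union> ?L" unfolding T_def by auto
  have dis: "T (int m) \<inter> ?L = {}" unfolding T_def by auto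
  have "card (T (int (Suc m))) = card (T (int m)) + card ?L"
    unfolding eq by (rule card_Un_disjoint[OF T_finite _ dis]) simp
  moreover have "card ?L = nat (int m+2) * nat (int m+2)" by (simp add: card_cartesian_product add.commute)
  moreover have "int (nat (int m+2) * nat (int m+2)) = (int m+2)*(int m+2)" by simp
  ultimately have "int (card (T (int (Suc m)))) = int (card (T (int m))) + (int m+2)*(int m+2)" by simp
  then show ?case using Suc.IH by (simp add: algebra_simps)
qed

fun g1 :: "int \<Rightarrow> pt \<Rightarrow> pt" where "g1 a (u,v,w) = (u+v+a-w, u-v, a-w)"
fun g2 :: "int \<Rightarrow> pt \<Rightarrow> pt" where "g2 a (u,v,w) = (u+v+a-w, u-v, w-a)"

lemma oct_decomp: "oct a = g1 a ` T a \<union> g2 a ` T (a-1)"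
proof
  show "g1 a ` T a \<union> g2 a ` T (a-1) \<subseteq> oct a"
    unfolding T_def oct_def by (auto; arith)
  show "oct a \<subseteq> g1 a ` T a \<union> g2 a ` T (a-1)"
  proof
    fix p assume "p \<in> oct a"
    then obtain x y z where p: "p = (x,y,z)" and h: "\<bar>x - a\<bar> + \<bar>y\<bar> + \<bar>z\<bar> \<le> a" "even (x+y+z)"
      unfolding oct_def by auto
    show "p \<in> g1 a ` T a \<union> g2 a ` T (a-1)"
    proof (cases "z \<ge> 0")
      case True
      have "even (x+y-z)" using h(2) by (metis add_diff_cancel_right' diff_add_cancel even_add even_diff) 
      then obtain u where u: "x+y-z = 2*u" by (metis evenE)
      have "(u, u - y, a - z) \<in> T a" using h(1) True u unfolding T_def by (auto; arith)
      moreover have "g1 a (u, u - y, a - z) = p" using u p by simp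
      ultimately show ?thesis by (metis UnI1 image_eqI)
    next
      case False
      then obtain u where u: "x+y+z = 2*u" using h(2) by (metis evenE)
      have "(u, u - y, a + z) \<in> T (a-1)" using h(1) False u unfolding T_def by (auto; arith)
      moreover have "g2 a (u, u - y, a + z) = p" using u p by simp
      ultimately show ?thesis by (metis UnI2 image_eqI)
    qed
  qed
qed

lemma oct_card: assumes "a \<ge> 1" shows "3 * int (card (oct a)) = (a+1) * (2*(a+1)^2+1)"
proof -
  have i1: "inj_on (g1 a) (T a)" unfolding inj_on_def T_def by auto
  have i2: "inj_on (g2 a) (T (a-1))" unfolding inj_on_def T_def by auto
  have dis: "g1 a ` T a \<inter> g2 a ` T (a-1) = {}" unfolding T_def by auto
  have c: "card (oct a) = card (T a) + card (T (a-1))"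
    unfolding oct_decomp
    by (subst card_Un_disjoint) (auto simp: T_finite dis card_image[OF i1] card_image[OF i2])
  obtain m where m: "a = int m + 1" using assms by (metis add.commute nonneg_int_cases le_add_diff_inverse2 zle_diff1_eq diff_ge_0_iff_ge)
  have "6 * int (card (T a)) = (int m+2)*(int m+3)*(2*int m+5)"
    using T_card[of "Suc m"] m by (simp add: algebra_simps)
  moreover have "6 * int (card (T (a-1))) = (int m+1)*(int m+2)*(2*int m+3)"
    using T_card[of m] m by simp
  ultimately show ?thesis using c m by (simp add: algebra_simps power2_eq_square)
qed
lemma real_ineq:
  fixes k n :: nat assumes "k \<ge> 1" "3 * n = k * (2 * k^2 + 1)"
  shows "6 * real k ^ 2 < root 3 486 * real n powr (2/3)"
proof -
  have n: "3 * real n = real k * (2 * real k ^ 2 + 1)"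
  proof -
    have "real (3 * n) = real (k * (2 * k^2 + 1))" using assms(2) by simp
    then show ?thesis by (simp add: algebra_simps)
  qed
  have kpos: "real k > 0" using assms(1) by simp
  have "real k * (2 * real k ^ 2 + 1) > 0" using kpos by (intro mult_pos_pos) (auto intro: add_nonneg_pos)
  then have npos: "real n > 0" using n by linarith
  have "(real n ^ 2) powr (1/3) = (real n powr 2) powr (1/3)"
    using npos by (subst powr_numeral) auto
  also have "\<dots> = real n powr (2/3)" unfolding powr_powr by simp
  finally have "real n powr (2/3) = (real n ^ 2) powr (1/3)" by simp
  also have "\<dots> = root 3 (real n ^ 2)" using npos by (simp add: root_powr_inverse)
  finally have p: "root 3 486 * real n powr (2/3) = root 3 (486 * real n ^ 2)" by (simp add: real_root_mult)
  have q: "6 * real k ^ 2 = root 3 ((6 * real k ^ 2)^3)" by (rule real_root_power_cancel[symmetric]) auto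
  have a0: "486 * (3 * real n)^2 = 9 * (486 * real n ^ 2)" by (simp add: power_mult_distrib)
  have a1: "486 * (3 * real n)^2 = 1944 * real k^6 + 1944 * real k^4 + 486 * real k^2" unfolding n by (simp add: power2_eq_square algebra_simps eval_nat_numeral)
  have a2: "9 * (6 * real k ^ 2)^3 = 1944 * real k^6" by (simp add: power_mult_distrib eval_nat_numeral)
  have a3: "0 < 1944 * real k^4 + 486 * real k^2" using kpos by (simp add: add_pos_pos)
  have "(6 * real k ^ 2)^3 < 486 * real n ^ 2" using a0 a1 a2 a3 by linarith
  then have "root 3 ((6 * real k ^ 2)^3) < root 3 (486 * real n ^ 2)" by simp
  then show ?thesis using p q by simp
qed

definition Dirs :: "pt set" where
  "Dirs = {(1,1,0),(1,-1,0),(1,0,1),(1,0,-1),(0,1,1),(0,1,-1)}"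

lemma oct_finite: "finite (oct a)"
  unfolding oct_decomp by (simp add: T_finite)

lemma E_bound: assumes "d \<in> Dirs"
  shows "card (oct a) \<le> card {p \<in> oct a. padd p d \<in> oct a} + nat (a+1) * nat (a+1)"
proof -
  have B: "card {p \<in> oct a. padd p d \<notin> oct a} \<le> nat (a+1) * nat (a+1)"
    using assms B1 B2 B3 B4 B5 B6 unfolding Dirs_def by auto
  have "card (oct a) = card ({p \<in> oct a. padd p d \<in> oct a} \<union> {p \<in> oct a. padd p d \<notin> oct a})"
    by (rule arg_cong[where f=card]) auto
  also have "\<dots> = card {p \<in> oct a. padd p d \<in> oct a} + card {p \<in> oct a. padd p d \<notin> oct a}"
    by (rule card_Un_disjoint) (auto intro: finite_subset[OF _ oct_finite])
  finally show ?thesis using B by linarith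
qed

lemma sqd_dir: "d \<in> Dirs \<Longrightarrow> sqd p (padd p d) = 2"
  by (cases p) (auto simp: Dirs_def)

lemma padd_cancel: "padd p d = padd p d' \<Longrightarrow> d = d'"
  by (cases p, cases d, cases d') auto

lemma no_opp: "d \<in> Dirs \<Longrightarrow> d' \<in> Dirs \<Longrightarrow> padd (padd p d) d' \<noteq> p"
  by (cases p) (auto simp: Dirs_def)

lemma emb_fcc: "even (x+y+z) \<Longrightarrow> emb (x,y,z) \<in> fcc_lattice"
  unfolding fcc_lattice_def
  by (rule CollectI, rule exI[of _ "vector [x,y,z] :: int^3"]) (simp add: forall_3)

lemma contact_le_pow: assumes "finite Q" shows "contact_number Q \<le> 2 ^ card Q"
proof -
  have "{{x, y} | x y. x \<in> Q \<and> y \<in> Q \<and> dist x y = 2} \<subseteq> Pow Q" by auto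
  then have "contact_number Q \<le> card (Pow Q)" unfolding contact_number_def
    by (rule card_mono[rotated]) (simp add: assms)
  then show ?thesis by (simp add: card_Pow assms)
qed

theorem theorem1:
  fixes k n :: nat
  assumes "k \<ge> 2"
    and "3 * n = k * (2 * k^2 + 1)"
  shows "6 * real n - root 3 486 * real n powr (2/3) < real (C_fcc n) \<and> C_fcc n \<le> C n"
proof -
  define a where "a = int k - 1"
  have a1: "a \<ge> 1" using assms(1) by (simp add: a_def)
  define S where "S = oct a"
  define P where "P = emb ` S"
  have finS: "finite S" unfolding S_def by (rule oct_finite)
  have "3 * int (card S) = (a+1) * (2*(a+1)^2+1)" unfolding S_def by (rule oct_card[OF a1])
  also have "\<dots> = int (3 * n)" unfolding assms(2) a_def by (simp add: algebra_simps)
  finally have cardS: "card S = n" by linarith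
  have injS: "inj_on emb S" using emb_inj by (rule inj_on_subset) simp
  have cardP: "card P = n" unfolding P_def using card_image[OF injS] cardS by simp
  have lat: "P \<subseteq> fcc_lattice"
  proof
    fix u assume "u \<in> P"
    then obtain x y z where u: "u = emb (x,y,z)" and m: "(x,y,z) \<in> oct a" unfolding P_def S_def by auto
    have "even (x+y+z)" using m unfolding oct_def by simp
    then show "u \<in> fcc_lattice" unfolding u by (rule emb_fcc)
  qed
  have pack: "unit_ball_packing P"
    unfolding unit_ball_packing_def
  proof (intro conjI ballI impI)
    show "finite P" unfolding P_def using finS by simp
    fix u w assume "u \<in> P" "w \<in> P" "u \<noteq> w"
    then obtain x y z x' y' z' where u: "u = emb (x,y,z)" and w: "w = emb (x',y',z')"
      and m: "(x,y,z) \<in> S" "(x',y',z') \<in> S" unfolding P_def by auto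
    have ne: "(x,y,z) \<noteq> (x',y',z')" using \<open>u \<noteq> w\<close> u w by auto
    have "even (x+y+z)" "even (x'+y'+z')" using m unfolding S_def oct_def by auto
    then have ev: "even ((x-x')+(y-y')+(z-z'))"
      proof -
      have "(x-x')+(y-y')+(z-z') = (x+y+z) - (x'+y'+z')" by simp
      then show ?thesis using \<open>even (x+y+z)\<close> \<open>even (x'+y'+z')\<close> by (metis dvd_diff)
    qed
    have "(x-x')^2+(y-y')^2+(z-z')^2 \<ge> 2" using ne ev by (intro sq_ge2) auto
    then have "sqd (x,y,z) (x',y',z') \<ge> 2" by simp
    then have "real_of_int (sqd (x,y,z) (x',y',z')) \<ge> 2" by (simp del: sqd.simps)
    then have "2 * real_of_int (sqd (x,y,z) (x',y',z')) \<ge> 2 * 2" by linarith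
    then have "sqrt (2 * 2) \<le> sqrt (2 * real_of_int (sqd (x,y,z) (x',y',z')))"
      using real_sqrt_le_mono by blast
    then show "dist u w \<ge> 2" unfolding u w dist_emb by simp
  qed
  define E where "E d = {p \<in> S. padd p d \<in> S}" for d
  define f where "f = (\<lambda>(d,p). {emb p, emb (padd p d)})"
  let ?CS = "{{x, y} | x y. x \<in> P \<and> y \<in> P \<and> dist x y = 2}"
  have inj: "inj_on f (Sigma Dirs E)"
  proof (rule inj_onI)
    fix dp dp' assume h: "dp \<in> Sigma Dirs E" "dp' \<in> Sigma Dirs E" "f dp = f dp'"
    obtain d p d' p' where dp: "dp = (d,p)" and dp': "dp' = (d',p')" by (cases dp, cases dp')
    have dD: "d \<in> Dirs" "d' \<in> Dirs" using h dp dp' by auto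
    have "{emb p, emb (padd p d)} = {emb p', emb (padd p' d')}" using h(3) dp dp' f_def by simp
    then have "(emb p = emb p' \<and> emb (padd p d) = emb (padd p' d')) \<or> (emb p = emb (padd p' d') \<and> emb (padd p d) = emb p')"
      by (simp only: doubleton_eq_iff)
    then have "(p = p' \<and> padd p d = padd p' d') \<or> (p = padd p' d' \<and> padd p d = p')"
      by (simp only: inj_eq[OF emb_inj])
    then show "dp = dp'"
    proof
      assume H: "p = p' \<and> padd p d = padd p' d'"
      then have "d = d'" using padd_cancel[of p d d'] by blast
      then show ?thesis using H dp dp' by simp
    next
      assume "p = padd p' d' \<and> padd p d = p'"
      then have "padd (padd p d) d' = p" by metis
      then show ?thesis using no_opp dD by blast
    qed
  qed
  have sub: "f ` Sigma Dirs E \<subseteq> ?CS"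
  proof
    fix s assume "s \<in> f ` Sigma Dirs E"
    then obtain d p where d: "d \<in> Dirs" and p: "p \<in> S" "padd p d \<in> S" and s: "s = {emb p, emb (padd p d)}"
      unfolding f_def E_def by auto
    have "dist (emb p) (emb (padd p d)) = 2" unfolding dist_emb sqd_dir[OF d] by simp
    then show "s \<in> ?CS" using p s unfolding P_def by blast
  qed
  have finCS: "finite ?CS"
  proof (rule finite_subset)
    show "?CS \<subseteq> Pow P" by auto
    show "finite (Pow P)" using finS unfolding P_def by simp
  qed
  have finD: "finite Dirs" unfolding Dirs_def by simp
  have cD: "card Dirs = 6" unfolding Dirs_def by simp
  have "card (Sigma Dirs E) \<le> card ?CS"
    using card_inj_on_le[OF inj sub finCS] .
  then have c1: "card (Sigma Dirs E) \<le> contact_number P" unfolding contact_number_def .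
  have c2: "card (Sigma Dirs E) = (\<Sum>d\<in>Dirs. card (E d))"
    using finD finS unfolding E_def by (intro card_SigmaI) auto
  have "(\<Sum>d\<in>Dirs. card S) \<le> (\<Sum>d\<in>Dirs. card (E d) + nat (a+1) * nat (a+1))"
    using E_bound unfolding E_def S_def by (intro sum_mono) auto
  then have "6 * n \<le> card (Sigma Dirs E) + 6 * (k * k)"
    using cD cardS c2 by (simp add: sum.distrib a_def)
  then have c3: "6 * real n \<le> real (contact_number P) + 6 * real k ^ 2"
  proof -
    have "6 * n \<le> contact_number P + 6 * (k * k)" using c1 \<open>6 * n \<le> card (Sigma Dirs E) + 6 * (k * k)\<close> by linarith
    then have "real (6 * n) \<le> real (contact_number P + 6 * (k * k))" by (simp only: of_nat_le_iff)
    then show ?thesis by (simp add: power2_eq_square)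
  qed
  have ri: "6 * real k ^ 2 < root 3 486 * real n powr (2/3)"
    using assms by (intro real_ineq) auto
  define A where "A = {contact_number Q | Q. unit_ball_packing Q \<and> card Q = n \<and> Q \<subseteq> fcc_lattice}"
  define B where "B = {contact_number Q | Q. unit_ball_packing Q \<and> card Q = n}"
  have AB: "A \<subseteq> B" unfolding A_def B_def by auto
  have bB: "bdd_above B"
  proof (rule bdd_aboveI)
    fix c assume "c \<in> B"
    then obtain Q where "c = contact_number Q" "unit_ball_packing Q" "card Q = n" unfolding B_def by auto
    then show "c \<le> 2 ^ n" using contact_le_pow unfolding unit_ball_packing_def by auto
  qed
  have inA: "contact_number P \<in> A" unfolding A_def using pack cardP lat by auto
  have "contact_number P \<le> Sup A" by (rule cSup_upper[OF inA bdd_above_mono[OF bB AB]])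
  moreover have "C_fcc n = Sup A" unfolding C_fcc_def A_def ..
  ultimately have "real (contact_number P) \<le> real (C_fcc n)" by simp
  then have part1: "6 * real n - root 3 486 * real n powr (2/3) < real (C_fcc n)" using c3 ri by linarith
  have "Sup A \<le> Sup B" using inA bB AB by (intro cSup_subset_mono) auto
  moreover have "C n = Sup B" unfolding C_def B_def ..
  ultimately have "C_fcc n \<le> C n" using \<open>C_fcc n = Sup A\<close> by simp
  then show ?thesis using part1 by simp
qed

end
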